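(* Let $\tau>0$, $a>0$, and let $s,d$ be integers with $1\le s<d/2$. The estimator $\hat\sigma^2=\frac1d\sum_{k=1}^{d-s}Y^2_{(k)}$ satisfies $$\sup_{P_\xi\in\mathcal G_{a,\tau}}\sup_{\sigma>0}\sup_{\theta\in\Theta_s}\frac{\mathbf E_{\theta,P_\xi,\sigma}(\hat\sigma^2-\sigma^2)^2}{\sigma^4}\le C\max\Big(\frac1{\sqrt d},\frac sd\log^{2/a}\Big(\frac{ed}{s}\Big)\Big)^2,$$ where $C>0$ depends only on $a$ and $\tau$.
   Context: Model: $Y_i=\theta_i+\sigma\xi_i$, $i=1,\dots,d$, $\theta\in\mathbb R^d$, $\sigma>0$, $\xi_i$ i.i.d. with distribution $P_\xi$, $\mathbf E\xi_1=0,\mathbf E\xi_1^2=1$; $\mathbf E_{\theta,P_\xi,\sigma}$ expectation; $\Theta_s=\{\theta:\|\theta\|_0\le s\}$. $\mathcal G_{a,\tau}$: distributions with $\mathbf E\xi_1=0,\mathbf E\xi_1^2=1$, $\mathbf P(|\xi_1|>t)\le2e^{-(t/\tau)^a}$ for all $t\ge2$. $Y^2_{(1)}\le\dots\le Y^2_{(d)}$ are the ordered values of $Y_1^2,\dots,Y_d^2$. *)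

theory Defs
  imports "HOL-Probability.Probability"
begin

definition noise_class :: "real \<Rightarrow> real \<Rightarrow> real measure \<Rightarrow> bool" where
  "noise_class a \<tau> P \<longleftrightarrow>
     prob_space P \<and> sets P = sets borel \<and>
     integrable P (\<lambda>x. x) \<and> integrable P (\<lambda>x. x\<^sup>2) \<and>
     (\<integral>x. x \<partial>P) = 0 \<and> (\<integral>x. x\<^sup>2 \<partial>P) = 1 \<and>
     (\<forall>t\<ge>2. measure P {x. \<bar>x\<bar> > t} \<le> 2 * exp (- ((t / \<tau>) powr a)))"

definition sparse_vecs :: "nat \<Rightarrow> nat \<Rightarrow> (nat \<Rightarrow> real) set" where
  "sparse_vecs d s = {\<theta>. card {i\<in>{..<d}. \<theta> i \<noteq> 0} \<le> s}"

definition obs :: "(nat \<Rightarrow> real) \<Rightarrow> real \<Rightarrow> (nat \<Rightarrow> real) \<Rightarrow> nat \<Rightarrow> real" where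
  "obs \<theta> \<sigma> \<xi> i = \<theta> i + \<sigma> * \<xi> i"

definition sigma_hat_sq :: "nat \<Rightarrow> nat \<Rightarrow> (nat \<Rightarrow> real) \<Rightarrow> real" where
  "sigma_hat_sq d s Y = sum_list (take (d - s) (sort (map (\<lambda>i. (Y i)\<^sup>2) [0..<d]))) / real d"

end

theory Submission
  imports Defs
begin

lemma sort_map_eq:
  fixes f :: "nat \<Rightarrow> real"
  shows "sort (map f xs) = map f (sort_key f xs)"
  by (rule properties_for_sort) (simp_all)

lemma take_sort_exists:
  fixes f :: "nat \<Rightarrow> real"
  assumes "m \<le> d"
  shows "\<exists>K. K \<subseteq> {..<d} \<and> card K = m \<and>
     sum_list (take m (sort (map f [0..<d]))) = sum f K"
proof -
  define ys where "ys = sort_key f [0..<d]"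
  have d: "distinct ys" "set ys = {..<d}" "length ys = d" unfolding ys_def by auto
  have "sum_list (take m (sort (map f [0..<d]))) = sum_list (map f (take m ys))"
    by (simp add: sort_map_eq ys_def take_map)
  also have "\<dots> = sum f (set (take m ys))"
    using d by (simp add: sum_list_distinct_conv_sum_set)
  finally show ?thesis
    using d assms by (intro exI[of _ "set (take m ys)"])
      (auto dest: in_set_takeD simp: distinct_card)
qed

lemma sum_le_bij:
  fixes f :: "nat \<Rightarrow> real"
  assumes "finite A" "finite B" "card A = card B" "\<And>x y. x \<in> A \<Longrightarrow> y \<in> B \<Longrightarrow> f x \<le> f y"
  shows "sum f A \<le> sum f B"
proof -
  obtain h where h: "bij_betw h A B" using finite_same_card_bij assms by blast
  have "sum f A \<le> sum (f \<circ> h) A"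
    using h assms(4) by (intro sum_mono) (auto simp: bij_betw_def)
  also have "\<dots> = sum f B" using sum.reindex_bij_betw[OF h] by simp
  finally show ?thesis .
qed

lemma take_sort_le:
  fixes f :: "nat \<Rightarrow> real"
  assumes "K \<subseteq> {..<d}" "card K = m"
  shows "sum_list (take m (sort (map f [0..<d]))) \<le> sum f K"
proof -
  define ys where "ys = sort_key f [0..<d]"
  have d: "distinct ys" "set ys = {..<d}" "length ys = d" unfolding ys_def by auto
  have md: "m \<le> d" using assms card_mono[OF _ assms(1)] by auto
  define K' where "K' = set (take m ys)"
  have "sum_list (take m (sort (map f [0..<d]))) = sum_list (map f (take m ys))"
    by (simp add: sort_map_eq ys_def take_map)
  also have "\<dots> = sum f K'"
    using d by (simp add: sum_list_distinct_conv_sum_set K'_def)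
  finally have eq: "sum_list (take m (sort (map f [0..<d]))) = sum f K'" .
  have cK': "card K' = m" using d md by (simp add: K'_def distinct_card)
  have fin: "finite K" "finite K'" using assms finite_subset by (auto simp: K'_def)
  have srt: "sorted (map f (take m ys) @ map f (drop m ys))"
    using sorted_sort_key[of f "[0..<d]"] unfolding ys_def
    by (metis append_take_drop_id map_append)
  have le: "f x \<le> f y" if "x \<in> K' - K" "y \<in> K - K'" for x y
  proof -
    have "y \<in> set ys" using that assms d by auto
    moreover have "set ys = set (take m ys) \<union> set (drop m ys)"
      by (metis append_take_drop_id set_append)
    ultimately have "y \<in> set (drop m ys)" using that unfolding K'_def by auto
    then show ?thesis using srt that unfolding K'_def sorted_append by auto
  qed
  have cc: "card (K' - K) = card (K - K')"
  proof -
    have "card (K' - K) = card K' - card (K' \<inter> K)" using fin by (simp add: card_Diff_subset_Int)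
    moreover have "card (K - K') = card K - card (K \<inter> K')" using fin by (simp add: card_Diff_subset_Int)
    ultimately show ?thesis using cK' assms(2) by (simp add: Int_commute)
  qed
  have "sum f K' = sum f (K' - K) + sum f (K' \<inter> K)"
    using sum.subset_diff[of "K' \<inter> K" K' f] fin by (simp add: Diff_Int2 Diff_Int_distrib Int_Diff Diff_Int)
  also have "\<dots> \<le> sum f (K - K') + sum f (K' \<inter> K)"
    using sum_le_bij[OF _ _ cc le] fin by auto
  also have "\<dots> = sum f K"
    using sum.subset_diff[of "K' \<inter> K" K f] fin by (simp add: Diff_Int Int_commute)
  finally show ?thesis using eq by simp
qed

lemma sq_sum_double:
  fixes h :: "nat \<Rightarrow> real"
  shows "(\<Sum>i<d. h i)\<^sup>2 = (\<Sum>i<d. \<Sum>j<d. h i * h j)"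
  by (simp add: power2_eq_square sum_product)

lemma sq_add_le: "(x + w)\<^sup>2 \<le> 2 * x\<^sup>2 + 2 * (w::real)\<^sup>2"
proof -
  have "0 \<le> (x - w)\<^sup>2" by simp
  then show ?thesis by (simp add: power2_eq_square algebra_simps)
qed

lemma pointwise_bound:
  fixes \<theta> \<xi> :: "nat \<Rightarrow> real" and u \<sigma> :: real and d s :: nat
  assumes J: "card {i\<in>{..<d}. \<theta> i \<noteq> 0} \<le> s" and ds: "2 * s < d" and sig: "\<sigma> > 0" and u: "u \<ge> 0"
  shows "(sigma_hat_sq d s (obs \<theta> \<sigma> \<xi>) - \<sigma>\<^sup>2)\<^sup>2 \<le> \<sigma>^4 / (real d)\<^sup>2 *
     (2 * (\<Sum>i<d. \<Sum>j<d. ((\<xi> i)\<^sup>2 - 1) * ((\<xi> j)\<^sup>2 - 1)) + 16 * (real s * u)\<^sup>2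
      + 16 * (\<Sum>i<d. \<Sum>j<d. max 0 ((\<xi> i)\<^sup>2 - u) * max 0 ((\<xi> j)\<^sup>2 - u)))"
proof -
  define J where "J = {i\<in>{..<d}. \<theta> i \<noteq> 0}"
  define Jc where "Jc = {..<d} - J"
  define f where "f i = (obs \<theta> \<sigma> \<xi> i)\<^sup>2" for i
  define g where "g i = (\<xi> i)\<^sup>2" for i
  define W where "W i = max 0 ((\<xi> i)\<^sup>2 - u)" for i
  define V where "V = (\<Sum>i<d. g i)"
  define R where "R = real s * u + (\<Sum>i<d. W i)"
  define S where "S = sum_list (take (d - s) (sort (map f [0..<d])))"
  have shat: "sigma_hat_sq d s (obs \<theta> \<sigma> \<xi>) = S / real d"
    unfolding sigma_hat_sq_def S_def f_def by simp
  have W0: "W i \<ge> 0" for i by (simp add: W_def)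
  have g0: "g i \<ge> 0" for i by (simp add: g_def)
  have f0: "f i \<ge> 0" for i by (simp add: f_def)
  have R0: "R \<ge> 0" unfolding R_def using W0 u by (simp add: sum_nonneg)
  have fJc: "f i = \<sigma>\<^sup>2 * g i" if "i \<in> Jc" for i
    using that by (simp add: Jc_def J_def f_def g_def obs_def power_mult_distrib)
  have cJ: "card J \<le> s" using J by (simp add: J_def)
  have JS: "J \<subseteq> {..<d}" by (auto simp: J_def)
  have bnd: "sum g B \<le> R" if B: "B \<subseteq> {..<d}" "card B \<le> s" for B
  proof -
    have fB: "finite B" using B finite_subset by auto
    have "sum g B \<le> sum (\<lambda>i. u + W i) B"
      by (intro sum_mono) (auto simp: g_def W_def)
    also have "\<dots> = real (card B) * u + sum W B" by (simp add: sum.distrib)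
    also have "\<dots> \<le> real s * u + (\<Sum>i<d. W i)"
      using B u W0 by (intro add_mono mult_right_mono sum_mono2) auto
    finally show ?thesis by (simp add: R_def)
  qed
  have cJc: "card Jc = d - card J" using JS by (simp add: Jc_def card_Diff_subset finite_subset)
  have "d - s \<le> card Jc" using cJc cJ by simp
  then obtain K where K: "K \<subseteq> Jc" "card K = d - s" "finite K"
    by (rule obtain_subset_with_card_n)
  have "S \<le> sum f K" unfolding S_def using K by (intro take_sort_le) (auto simp: Jc_def)
  also have "\<dots> = \<sigma>\<^sup>2 * sum g K" using K fJc by (simp add: sum_distrib_left subset_iff)
  also have "\<dots> \<le> \<sigma>\<^sup>2 * V" unfolding V_def using K g0
    by (intro mult_left_mono sum_mono2) (auto simp: Jc_def)
  finally have up: "S \<le> \<sigma>\<^sup>2 * V" .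
  obtain K2 where K2: "K2 \<subseteq> {..<d}" "card K2 = d - s" "S = sum f K2"
    using take_sort_exists[of "d - s" d f] unfolding S_def by auto
  have fK2: "finite K2" using K2 finite_subset by auto
  have "sum f (K2 \<inter> Jc) \<le> sum f K2" using fK2 f0 by (intro sum_mono2) auto
  also have "sum f (K2 \<inter> Jc) = \<sigma>\<^sup>2 * sum g (K2 \<inter> Jc)" using fJc by (simp add: sum_distrib_left)
  finally have lo1: "\<sigma>\<^sup>2 * sum g (K2 \<inter> Jc) \<le> S" using K2 by simp
  have part: "V = sum g J + sum g (Jc - K2) + sum g (K2 \<inter> Jc)"
  proof -
    have "{..<d} = J \<union> ((Jc - K2) \<union> (K2 \<inter> Jc))" using JS by (auto simp: Jc_def)
    moreover have "J \<inter> ((Jc - K2) \<union> (K2 \<inter> Jc)) = {}" "(Jc - K2) \<inter> (K2 \<inter> Jc) = {}"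
      by (auto simp: Jc_def)
    ultimately show ?thesis unfolding V_def
      by (metis finite_Un finite_lessThan sum.union_disjoint add.assoc)
  qed
  have cD: "card (Jc - K2) \<le> s"
  proof -
    have e: "Jc - K2 = {..<d} - (J \<union> K2)" by (auto simp: Jc_def)
    have "card (J \<union> K2) \<ge> d - s" using K2 fK2 JS card_mono[of "J \<union> K2" K2] finite_subset[OF JS] by auto
    moreover have "J \<union> K2 \<subseteq> {..<d}" using JS K2 by auto
    ultimately show ?thesis unfolding e using card_Diff_subset[of "J \<union> K2" "{..<d}"]
      using finite_subset[OF JS] fK2 by simp
  qed
  have "sum g J \<le> R" using bnd JS cJ by auto
  moreover have "sum g (Jc - K2) \<le> R" using bnd[of "Jc - K2"] cD by (auto simp: Jc_def)
  ultimately have "sum g (K2 \<inter> Jc) \<ge> V - 2 * R" using part by linarith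
  then have lo: "\<sigma>\<^sup>2 * (V - 2 * R) \<le> S" using lo1 sig
    by (meson dual_order.trans mult_left_mono zero_le_power2)
  define z where "z = S / \<sigma>\<^sup>2 - real d"
  have sp: "\<sigma>\<^sup>2 > 0" using sig by simp
  have zu: "z \<le> V - d" using up sp unfolding z_def by (simp add: divide_le_eq mult.commute)
  have zl: "V - d - 2 * R \<le> z" using lo sp unfolding z_def by (simp add: le_divide_eq mult.commute)
  have z2: "z\<^sup>2 \<le> 2 * (V - d)\<^sup>2 + 8 * R\<^sup>2"
  proof -
    have "\<bar>z\<bar> \<le> \<bar>V - d\<bar> + 2 * R" using zu zl R0 by linarith
    then have "\<bar>z\<bar>\<^sup>2 \<le> (\<bar>V - d\<bar> + 2 * R)\<^sup>2"
      by (intro power_mono) auto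
    then have "z\<^sup>2 \<le> (\<bar>V - d\<bar> + 2 * R)\<^sup>2" by simp
    also have "\<dots> \<le> 2 * (V - d)\<^sup>2 + 8 * R\<^sup>2"
      using sq_add_le[of "\<bar>V - d\<bar>" "2 * R"] by (simp add: power_mult_distrib)
    finally show ?thesis .
  qed
  have R2: "R\<^sup>2 \<le> 2 * (real s * u)\<^sup>2 + 2 * (\<Sum>i<d. W i)\<^sup>2"
    unfolding R_def by (rule sq_add_le)
  have dpos: "real d > 0" using ds by simp
  have eq: "(S / real d - \<sigma>\<^sup>2) = \<sigma>\<^sup>2 * z / real d"
    unfolding z_def using sp dpos by (simp add: field_simps)
  have Vd: "(V - d)\<^sup>2 = (\<Sum>i<d. \<Sum>j<d. ((\<xi> i)\<^sup>2 - 1) * ((\<xi> j)\<^sup>2 - 1))"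
  proof -
    have "V - d = (\<Sum>i<d. ((\<xi> i)\<^sup>2 - 1))" by (simp add: V_def g_def sum_subtractf)
    then show ?thesis by (simp add: sq_sum_double)
  qed
  have Ws: "(\<Sum>i<d. W i)\<^sup>2 = (\<Sum>i<d. \<Sum>j<d. max 0 ((\<xi> i)\<^sup>2 - u) * max 0 ((\<xi> j)\<^sup>2 - u))"
    by (simp add: sq_sum_double W_def)
  have "(sigma_hat_sq d s (obs \<theta> \<sigma> \<xi>) - \<sigma>\<^sup>2)\<^sup>2 = \<sigma>^4 / (real d)\<^sup>2 * z\<^sup>2"
    unfolding shat eq by (simp add: power_divide power_mult_distrib)
  also have "\<dots> \<le> \<sigma>^4 / (real d)\<^sup>2 * (2 * (V - d)\<^sup>2 + 16 * (real s * u)\<^sup>2 + 16 * (\<Sum>i<d. W i)\<^sup>2)"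
    using z2 R2 by (intro mult_left_mono) auto
  finally show ?thesis unfolding Vd Ws .
qed

lemma pim_pair:
  fixes h k :: "real \<Rightarrow> real"
  assumes P: "prob_space P" and I: "finite I" "i \<in> I" "j \<in> I" "i \<noteq> j"
    and h: "integrable P h" and k: "integrable P k"
  shows "integrable (PiM I (\<lambda>_. P)) (\<lambda>x. h (x i) * k (x j))"
    "(\<integral>x. h (x i) * k (x j) \<partial>PiM I (\<lambda>_. P)) = (\<integral>x. h x \<partial>P) * (\<integral>x. k x \<partial>P)"
proof -
  interpret prob_space P by fact
  interpret product_sigma_finite "\<lambda>_. P"
    by (simp add: product_sigma_finite_def sigma_finite_measure_axioms)
  define F where "F l = (if l = i then h else if l = j then k else (\<lambda>_. 1))" for l
  have int: "integrable P (F l)" for l using h k by (simp add: F_def)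
  have pe: "(\<Prod>l\<in>I. F l (x l)) = h (x i) * k (x j)" for x
  proof -
    have "(\<Prod>l\<in>I. F l (x l)) = F i (x i) * (\<Prod>l\<in>I - {i}. F l (x l))"
      using I by (simp add: prod.remove)
    also have "(\<Prod>l\<in>I - {i}. F l (x l)) = F j (x j) * (\<Prod>l\<in>I - {i} - {j}. F l (x l))"
      using I by (subst prod.remove[of "I - {i}" j]) auto
    also have "(\<Prod>l\<in>I - {i} - {j}. F l (x l)) = 1"
      by (intro prod.neutral) (auto simp: F_def)
    finally show ?thesis using I by (simp add: F_def)
  qed
  have pi: "(\<Prod>l\<in>I. integral\<^sup>L P (F l)) = integral\<^sup>L P h * integral\<^sup>L P k"
  proof -
    have "(\<Prod>l\<in>I. integral\<^sup>L P (F l)) = integral\<^sup>L P (F i) * (\<Prod>l\<in>I - {i}. integral\<^sup>L P (F l))"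
      using I by (simp add: prod.remove)
    also have "(\<Prod>l\<in>I - {i}. integral\<^sup>L P (F l)) = integral\<^sup>L P (F j) * (\<Prod>l\<in>I - {i} - {j}. integral\<^sup>L P (F l))"
      using I by (subst prod.remove[of "I - {i}" j]) auto
    also have "(\<Prod>l\<in>I - {i} - {j}. integral\<^sup>L P (F l)) = 1"
      by (intro prod.neutral) (auto simp: F_def prob_space)
    finally show ?thesis using I by (simp add: F_def)
  qed
  show "integrable (PiM I (\<lambda>_. P)) (\<lambda>x. h (x i) * k (x j))"
    using product_integrable_prod[of I F] I int by (simp add: pe)
  show "(\<integral>x. h (x i) * k (x j) \<partial>PiM I (\<lambda>_. P)) = (\<integral>x. h x \<partial>P) * (\<integral>x. k x \<partial>P)"
    using product_integral_prod[of I F] I int by (simp add: pe pi)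
qed

lemma pim_single:
  fixes h :: "real \<Rightarrow> real"
  assumes P: "prob_space P" and I: "finite I" "i \<in> I" and h: "integrable P h"
  shows "integrable (PiM I (\<lambda>_. P)) (\<lambda>x. h (x i))"
    "(\<integral>x. h (x i) \<partial>PiM I (\<lambda>_. P)) = (\<integral>x. h x \<partial>P)"
proof -
  interpret prob_space P by fact
  interpret product_sigma_finite "\<lambda>_. P"
    by (simp add: product_sigma_finite_def sigma_finite_measure_axioms)
  define F where "F l = (if l = i then h else (\<lambda>_. 1))" for l
  have int: "integrable P (F l)" for l using h by (simp add: F_def)
  have pe: "(\<Prod>l\<in>I. F l (x l)) = h (x i)" for x
  proof -
    have "(\<Prod>l\<in>I. F l (x l)) = F i (x i) * (\<Prod>l\<in>I - {i}. F l (x l))"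
      using I by (simp add: prod.remove)
    also have "(\<Prod>l\<in>I - {i}. F l (x l)) = 1"
      by (intro prod.neutral) (auto simp: F_def)
    finally show ?thesis using I by (simp add: F_def)
  qed
  have pi: "(\<Prod>l\<in>I. integral\<^sup>L P (F l)) = integral\<^sup>L P h"
  proof -
    have "(\<Prod>l\<in>I. integral\<^sup>L P (F l)) = integral\<^sup>L P (F i) * (\<Prod>l\<in>I - {i}. integral\<^sup>L P (F l))"
      using I by (simp add: prod.remove)
    also have "(\<Prod>l\<in>I - {i}. integral\<^sup>L P (F l)) = 1"
      by (intro prod.neutral) (auto simp: F_def prob_space)
    finally show ?thesis using I by (simp add: F_def)
  qed
  show "integrable (PiM I (\<lambda>_. P)) (\<lambda>x. h (x i))"
    using product_integrable_prod[of I F] I int by (simp add: pe)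
  show "(\<integral>x. h (x i) \<partial>PiM I (\<lambda>_. P)) = (\<integral>x. h x \<partial>P)"
    using product_integral_prod[of I F] I int by (simp add: pe pi)
qed

lemma exp_pow_bound:
  fixes y :: real
  assumes "y \<ge> 0" "m > 0"
  shows "(y / real m) ^ m \<le> exp y"
proof -
  have "exp y = exp (real m * (y / real m))" using assms by simp
  also have "\<dots> = exp (y / real m) ^ m" by (rule exp_of_nat_mult)
  finally have e: "exp y = exp (y / real m) ^ m" .
  have "y / real m \<le> exp (y / real m)"
    using exp_ge_add_one_self[of "y / real m"] by linarith
  then show ?thesis unfolding e using assms by (intro power_mono) auto
qed

lemma tail_term_bound:
  fixes a \<tau> :: real and m :: nat
  assumes a: "a > 0" and t: "\<tau> > 0" and m: "m > 0" "a * real m \<ge> 10"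
  shows "(real k + 3)^8 * (2 * exp (- (((real k + 2) / \<tau>) powr a)))
     \<le> 512 * (real m ^ m * \<tau> powr (a * real m)) * inverse ((2 + real k)^2)"
proof -
  define b where "b = real k + 2"
  have b: "b \<ge> 2" by (simp add: b_def)
  define y where "y = (b / \<tau>) powr a"
  have y: "y > 0" using b t by (simp add: y_def)
  have ym: "y ^ m = b powr (a * real m) / \<tau> powr (a * real m)"
  proof -
    have "y ^ m = y powr real m" using y by (simp add: powr_realpow)
    also have "\<dots> = (b / \<tau>) powr (a * real m)" by (simp add: y_def powr_powr)
    finally show ?thesis by (simp add: powr_divide)
  qed
  have b10: "b ^ 10 \<le> b powr (a * real m)"
  proof -
    have "b powr 10 \<le> b powr (a * real m)" using b m by (intro powr_mono) auto
    moreover have "b powr 10 = b ^ 10" using b powr_realpow[of b 10] by simp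
    ultimately show ?thesis by simp
  qed
  have tp: "\<tau> powr (a * real m) > 0" using t by simp
  have "(y / real m) ^ m \<le> exp y" using y m by (intro exp_pow_bound) auto
  then have "y ^ m / real m ^ m \<le> exp y" by (simp add: power_divide)
  then have ey: "exp (- y) \<le> real m ^ m / y ^ m"
    using y m by (simp add: exp_minus field_simps)
  also have "\<dots> = real m ^ m * \<tau> powr (a * real m) / b powr (a * real m)"
    unfolding ym using tp by simp
  also have "\<dots> \<le> real m ^ m * \<tau> powr (a * real m) / b ^ 10"
    using b10 b tp by (intro divide_left_mono mult_nonneg_nonneg mult_pos_pos) auto
  finally have e1: "exp (- y) \<le> real m ^ m * \<tau> powr (a * real m) / b ^ 10" .
  have k3: "(real k + 3) ^ 8 \<le> (2 * b) ^ 8" using b by (intro power_mono) (auto simp: b_def)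
  define C0 where "C0 = real m ^ m * \<tau> powr (a * real m)"
  have C0: "C0 \<ge> 0" by (simp add: C0_def)
  have "(real k + 3)^8 * (2 * exp (- y)) \<le> (2 * b) ^ 8 * (2 * (C0 / b ^ 10))"
    using k3 e1 by (intro mult_mono) (auto simp: C0_def)
  also have "\<dots> = 512 * C0 * inverse (b ^ 2)"
    using b by (simp add: field_simps power_mult_distrib)
  finally show ?thesis by (simp add: y_def b_def C0_def add.commute)
qed

lemma tail_summable:
  fixes a \<tau> :: real
  assumes a: "a > 0" and t: "\<tau> > 0"
  shows "summable (\<lambda>k. (real k + 3)^8 * (2 * exp (- (((real k + 2) / \<tau>) powr a))))"
proof -
  define m where "m = nat \<lceil>10 / a\<rceil>"
  have m1: "real m \<ge> 10 / a" unfolding m_def by linarith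
  then have m: "m > 0" using a by (smt (verit) divide_pos_pos of_nat_0_less_iff)
  have am: "a * real m \<ge> 10" using m1 a by (simp add: field_simps)
  have s: "summable (\<lambda>k. 512 * (real m ^ m * \<tau> powr (a * real m)) * inverse ((2 + real k)^2))"
    by (intro summable_mult Polygamma_converges') auto
  show ?thesis
    by (rule summable_comparison_test'[OF s, of 0])
      (use tail_term_bound[OF a t m am] in auto)
qed

lemma x8_pointwise:
  fixes x :: real
  shows "ennreal (x^8) \<le> ennreal (3^8) + (\<Sum>k. ennreal ((real k + 3)^8) * indicator {x. real k + 2 < \<bar>x\<bar>} x)"
proof (cases "\<bar>x\<bar> \<le> 3")
  case True
  have "x^8 = \<bar>x\<bar>^8" by (simp add: power_abs)
  also have "\<dots> \<le> 3^8" using True by (intro power_mono) auto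
  finally have "ennreal (x^8) \<le> ennreal (3^8)" by (intro ennreal_leI)
  then show ?thesis by (rule order_trans) simp
next
  case False
  define c where "c = \<lceil>\<bar>x\<bar>\<rceil>"
  have c4: "c \<ge> 4" using False unfolding c_def by linarith
  define k where "k = nat (c - 3)"
  have rk: "real k = real_of_int c - 3" using c4 by (simp add: k_def)
  have up: "\<bar>x\<bar> \<le> real k + 3" using rk c_def by linarith
  have lo: "real k + 2 < \<bar>x\<bar>" using rk c_def by linarith
  have "x^8 = \<bar>x\<bar>^8" by (simp add: power_abs)
  also have "\<dots> \<le> (real k + 3)^8" using up by (intro power_mono) auto
  finally have "ennreal (x^8) \<le> ennreal ((real k + 3)^8) * indicator {x. real k + 2 < \<bar>x\<bar>} x"
    using lo by (simp add: ennreal_leI)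
  also have "\<dots> \<le> (\<Sum>k. ennreal ((real k + 3)^8) * indicator {x. real k + 2 < \<bar>x\<bar>} x)"
    using sum_le_suminf[OF summableI, of "{k}"] by simp
  also have "\<dots> \<le> ennreal (3^8) + \<dots>" by simp
  finally show ?thesis .
qed

lemma moment8:
  fixes a \<tau> :: real
  assumes a: "a > 0" and t: "\<tau> > 0"
  shows "\<exists>K\<ge>0. \<forall>P. noise_class a \<tau> P \<longrightarrow> integrable P (\<lambda>x. x^8) \<and> (\<integral>x. x^8 \<partial>P) \<le> K"
proof -
  define g where "g k = (real k + 3)^8 * (2 * exp (- (((real k + 2) / \<tau>) powr a)))" for k
  have gs: "summable g" unfolding g_def by (rule tail_summable[OF a t])
  have g0: "g k \<ge> 0" for k by (simp add: g_def)
  define K where "K = 3^8 + suminf g"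
  have K0: "K \<ge> 0" using suminf_nonneg[OF gs g0] by (simp add: K_def)
  show ?thesis
  proof (intro exI[of _ K] conjI allI impI K0)
    fix P assume nc: "noise_class a \<tau> P"
    then have ps: "prob_space P" and sP: "sets P = sets borel"
      and tail: "\<And>t. t \<ge> 2 \<Longrightarrow> measure P {x. \<bar>x\<bar> > t} \<le> 2 * exp (- ((t / \<tau>) powr a))"
      by (auto simp: noise_class_def)
    interpret prob_space P by fact
    have meas: "f \<in> borel_measurable P" if "f \<in> borel_measurable borel" for f :: "real \<Rightarrow> real"
      by (subst measurable_cong_sets[OF sP refl]) (rule that)
    have setk: "{x. real k + 2 < \<bar>x\<bar>} \<in> sets P" for k
    proof -
      have "(\<lambda>x::real. \<bar>x\<bar>) \<in> borel_measurable P" by (intro meas) simp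
      then have "{x \<in> space P. real k + 2 < \<bar>x\<bar>} \<in> sets P" by measurable
      moreover have "space P = UNIV" using sets_eq_imp_space_eq[OF sP] by simp
      ultimately show ?thesis by simp
    qed
    have "(\<integral>\<^sup>+x. ennreal (x^8) \<partial>P) \<le> (\<integral>\<^sup>+x. ennreal (3^8) + (\<Sum>k. ennreal ((real k + 3)^8) * indicator {x. real k + 2 < \<bar>x\<bar>} x) \<partial>P)"
      by (intro nn_integral_mono x8_pointwise)
    also have "\<dots> = ennreal (3^8) + (\<Sum>k. ennreal ((real k + 3)^8) * emeasure P {x. real k + 2 < \<bar>x\<bar>})"
      using setk emeasure_space_1
      by (subst nn_integral_add) (auto simp: nn_integral_suminf nn_integral_cmult_indicator)
    also have "\<dots> \<le> ennreal (3^8) + (\<Sum>k. ennreal (g k))"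
    proof (intro add_mono order_refl suminf_le summableI)
      fix k
      have "emeasure P {x. real k + 2 < \<bar>x\<bar>} = ennreal (measure P {x. real k + 2 < \<bar>x\<bar>})"
        by (simp add: emeasure_eq_measure)
      also have "\<dots> \<le> ennreal (2 * exp (- (((real k + 2) / \<tau>) powr a)))"
        using tail[of "real k + 2"] by (intro ennreal_leI) auto
      finally have "ennreal ((real k + 3)^8) * emeasure P {x. real k + 2 < \<bar>x\<bar>} \<le>
          ennreal ((real k + 3)^8) * ennreal (2 * exp (- (((real k + 2) / \<tau>) powr a)))"
        by (rule mult_left_mono) simp
      also have "\<dots> = ennreal (g k)" unfolding g_def by (rule ennreal_mult[symmetric]) auto
      finally show "ennreal ((real k + 3)^8) * emeasure P {x. real k + 2 < \<bar>x\<bar>} \<le> ennreal (g k)" .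
    qed
    also have "\<dots> = ennreal K"
    proof -
      have "(\<Sum>k. ennreal (g k)) = ennreal (suminf g)" using g0 gs by (rule suminf_ennreal2)
      moreover have "ennreal K = ennreal (3^8) + ennreal (suminf g)"
        unfolding K_def using suminf_nonneg[OF gs g0] by (intro ennreal_plus) auto
      ultimately show ?thesis by simp
    qed
    finally have nn: "(\<integral>\<^sup>+x. ennreal (x^8) \<partial>P) \<le> ennreal K" .
    have m8: "(\<lambda>x::real. x^8) \<in> borel_measurable P" by (intro meas) simp
    show int: "integrable P (\<lambda>x. x^8)"
    proof (rule integrableI_bounded[OF m8])
      have "(\<integral>\<^sup>+x. ennreal (norm (x^8::real)) \<partial>P) = (\<integral>\<^sup>+x. ennreal (x^8) \<partial>P)"
      proof (intro nn_integral_cong)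
        fix x :: real
        have "0 \<le> x^8" by (simp add: zero_le_even_power')
        then show "ennreal (norm (x^8)) = ennreal (x^8)" unfolding real_norm_def by simp
      qed
      then show "(\<integral>\<^sup>+x. ennreal (norm (x^8::real)) \<partial>P) < \<infinity>" using order.strict_trans1[OF nn ennreal_less_top] by simp
    qed
    have "ennreal (\<integral>x. x^8 \<partial>P) = (\<integral>\<^sup>+x. ennreal (x^8) \<partial>P)"
      by (rule nn_integral_eq_integral[OF int, symmetric]) simp
    then have "ennreal (\<integral>x. x^8 \<partial>P) \<le> ennreal K" using nn by simp
    then show "(\<integral>x. x^8 \<partial>P) \<le> K" using K0 ennreal_le_iff by blast
  qed
qed

lemma amgm_aux:
  fixes y t :: real
  assumes "y \<ge> 0" "t > 0"
  shows "y \<le> (t * y\<^sup>2 + 1 / t) / 2"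
proof -
  have "0 \<le> (t * y - 1)\<^sup>2" by simp
  then have h: "2 * t * y \<le> (t * y)\<^sup>2 + 1" by (simp add: power2_eq_square algebra_simps)
  have e: "(t * y\<^sup>2 + 1 / t) / 2 = ((t * y)\<^sup>2 + 1) / (2 * t)"
    using assms by (simp add: field_simps power2_eq_square)
  show ?thesis unfolding e using h assms by (simp add: pos_le_divide_eq mult.commute mult.left_commute)
qed

lemma W_bounds:
  fixes P :: "real measure" and r t p K4 K8 :: real
  assumes P: "prob_space P" "sets P = sets borel"
    and i4: "integrable P (\<lambda>x. x^4)" and i8: "integrable P (\<lambda>x. x^8)"
    and e4: "(\<integral>x. x^4 \<partial>P) \<le> K4" and e8: "(\<integral>x. x^8 \<partial>P) \<le> K8"
    and r: "r \<ge> 0" and t: "t > 0" and tail: "measure P {x. \<bar>x\<bar> > r} \<le> p"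
  shows "integrable P (\<lambda>x. max 0 (x\<^sup>2 - r\<^sup>2))"
    "(\<integral>x. max 0 (x\<^sup>2 - r\<^sup>2) \<partial>P) \<le> (t * K4 + p / t) / 2"
    "integrable P (\<lambda>x. max 0 (x\<^sup>2 - r\<^sup>2) * max 0 (x\<^sup>2 - r\<^sup>2))"
    "(\<integral>x. max 0 (x\<^sup>2 - r\<^sup>2) * max 0 (x\<^sup>2 - r\<^sup>2) \<partial>P) \<le> (t * K8 + p / t) / 2"
proof -
  interpret prob_space P by fact
  have meas: "f \<in> borel_measurable P" if "f \<in> borel_measurable borel" for f :: "real \<Rightarrow> real"
    by (subst measurable_cong_sets[OF P(2) refl]) (rule that)
  have spc: "space P = UNIV" using sets_eq_imp_space_eq[OF P(2)] by simp
  define A where "A = {x::real. \<bar>x\<bar> > r}"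
  have A: "A \<in> sets P"
  proof -
    have "(\<lambda>x::real. \<bar>x\<bar>) \<in> borel_measurable P" by (intro meas) simp
    then have "{x \<in> space P. r < \<bar>x\<bar>} \<in> sets P" by measurable
    then show ?thesis using spc by (simp add: A_def)
  qed
  have iA: "integrable P (indicator A :: real \<Rightarrow> real)"
    using A by (intro integrable_real_indicator) (simp_all add: emeasure_eq_measure)
  have intA: "(\<integral>x. indicator A x \<partial>P) = measure P A" using A spc by simp
  define W where "W x = max 0 (x\<^sup>2 - r\<^sup>2)" for x :: real
  have Wm: "W \<in> borel_measurable P" unfolding W_def by (intro meas) simp
  have W0: "W x \<ge> 0" for x by (simp add: W_def)
  have Wx2: "W x \<le> x\<^sup>2" for x by (simp add: W_def)
  have WA: "W x = 0" if "x \<notin> A" for x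
  proof -
    have "\<bar>x\<bar> \<le> r" using that by (simp add: A_def)
    then have "x\<^sup>2 \<le> r\<^sup>2" using r by (metis abs_le_square_iff abs_of_nonneg)
    then show ?thesis by (simp add: W_def)
  qed
  have pw1: "W x \<le> (t * x^4 + (1/t) * indicator A x) / 2" for x
  proof (cases "x \<in> A")
    case True
    have "W x \<le> x\<^sup>2" by (rule Wx2)
    also have "\<dots> \<le> (t * (x\<^sup>2)\<^sup>2 + 1 / t) / 2" using t by (intro amgm_aux) auto
    finally show ?thesis using True by (simp add: power_mult_distrib flip: power_mult)
  next
    case False
    then show ?thesis using WA t by (simp add: zero_le_even_power')
  qed
  have pw2: "W x * W x \<le> (t * x^8 + (1/t) * indicator A x) / 2" for x
  proof (cases "x \<in> A")
    case True
    have "W x * W x \<le> x\<^sup>2 * x\<^sup>2" using W0 Wx2 by (intro mult_mono) auto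
    also have "\<dots> = x^4" by (simp add: power2_eq_square power4_eq_xxxx)
    also have "\<dots> \<le> (t * (x^4)\<^sup>2 + 1 / t) / 2" using t by (intro amgm_aux) auto
    finally show ?thesis using True by (simp flip: power_mult)
  next
    case False
    then show ?thesis using WA t by (simp add: zero_le_even_power')
  qed
  have iR1: "integrable P (\<lambda>x. (t * x^4 + (1/t) * indicator A x) / 2)" using i4 iA by simp
  have iR2: "integrable P (\<lambda>x. (t * x^8 + (1/t) * indicator A x) / 2)" using i8 iA by simp
  show i1: "integrable P (\<lambda>x. max 0 (x\<^sup>2 - r\<^sup>2))"
    unfolding W_def[symmetric]
  proof (rule Bochner_Integration.integrable_bound[OF iR1 Wm], rule AE_I2)
    fix x
    have "norm (W x) \<le> (t * x^4 + (1/t) * indicator A x) / 2" using pw1 W0 by simp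
    then show "norm (W x) \<le> norm ((t * x^4 + (1/t) * indicator A x) / 2)" by simp
  qed
  show i2: "integrable P (\<lambda>x. max 0 (x\<^sup>2 - r\<^sup>2) * max 0 (x\<^sup>2 - r\<^sup>2))"
    unfolding W_def[symmetric]
  proof (rule Bochner_Integration.integrable_bound[OF iR2], use Wm in simp, rule AE_I2)
    fix x
    have "norm (W x * W x) \<le> (t * x^8 + (1/t) * indicator A x) / 2" using pw2 W0 by simp
    then show "norm (W x * W x) \<le> norm ((t * x^8 + (1/t) * indicator A x) / 2)" by simp
  qed
  have mA: "measure P A \<le> p" using tail by (simp add: A_def)
  have "(\<integral>x. W x \<partial>P) \<le> (\<integral>x. (t * x^4 + (1/t) * indicator A x) / 2 \<partial>P)"
    using i1 iR1 pw1 unfolding W_def[symmetric] by (intro integral_mono) auto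
  also have "\<dots> = (t * (\<integral>x. x^4 \<partial>P) + (1/t) * measure P A) / 2"
    using i4 iA intA by simp
  also have "\<dots> \<le> (t * K4 + p / t) / 2"
    using e4 mA t by (intro divide_right_mono add_mono mult_left_mono) (auto simp: divide_simps)
  finally show "(\<integral>x. max 0 (x\<^sup>2 - r\<^sup>2) \<partial>P) \<le> (t * K4 + p / t) / 2" by (simp add: W_def)
  have "(\<integral>x. W x * W x \<partial>P) \<le> (\<integral>x. (t * x^8 + (1/t) * indicator A x) / 2 \<partial>P)"
    using i2 iR2 pw2 unfolding W_def[symmetric] by (intro integral_mono) auto
  also have "\<dots> = (t * (\<integral>x. x^8 \<partial>P) + (1/t) * measure P A) / 2"
    using i8 iA intA by simp
  also have "\<dots> \<le> (t * K8 + p / t) / 2"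
    using e8 mA t by (intro divide_right_mono add_mono mult_left_mono) (auto simp: divide_simps)
  finally show "(\<integral>x. max 0 (x\<^sup>2 - r\<^sup>2) * max 0 (x\<^sup>2 - r\<^sup>2) \<partial>P) \<le> (t * K8 + p / t) / 2"
    by (simp add: W_def)
qed

lemma dsum_if:
  fixes A B :: real
  assumes "i < d"
  shows "(\<Sum>j<d. if i = j then A else B) = (A - B) + real d * B"
proof -
  have "(\<Sum>j<d. if i = j then A else B) = (\<Sum>j<d. B + (if i = j then A - B else 0))"
    by (intro sum.cong) auto
  also have "\<dots> = real d * B + (A - B)" using assms by (simp add: sum.distrib)
  finally show ?thesis by simp
qed

lemma dsum_pim:
  fixes h :: "real \<Rightarrow> real"
  assumes P: "prob_space P" and h: "integrable P h" and hh: "integrable P (\<lambda>x. h x * h x)"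
  shows "integrable (PiM {..<d} (\<lambda>_. P)) (\<lambda>\<xi>. \<Sum>i<d. \<Sum>j<d. h (\<xi> i) * h (\<xi> j))"
    "(\<integral>\<xi>. (\<Sum>i<d. \<Sum>j<d. h (\<xi> i) * h (\<xi> j)) \<partial>PiM {..<d} (\<lambda>_. P))
       \<le> real d * (\<integral>x. h x * h x \<partial>P) + (real d)\<^sup>2 * (\<integral>x. h x \<partial>P)\<^sup>2"
proof -
  let ?M = "PiM {..<d} (\<lambda>_. P)"
  define A where "A = (\<integral>x. h x * h x \<partial>P)"
  define B where "B = (\<integral>x. h x \<partial>P)\<^sup>2"
  have ti: "integrable ?M (\<lambda>\<xi>. h (\<xi> i) * h (\<xi> j))"
    and te: "(\<integral>\<xi>. h (\<xi> i) * h (\<xi> j) \<partial>?M) = (if i = j then A else B)"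
    if "i < d" "j < d" for i j
  proof -
    have "integrable ?M (\<lambda>\<xi>. h (\<xi> i) * h (\<xi> j)) \<and>
        (\<integral>\<xi>. h (\<xi> i) * h (\<xi> j) \<partial>?M) = (if i = j then A else B)"
    proof (cases "i = j")
      case True
      then show ?thesis using pim_single[OF P _ _ hh, of "{..<d}" i] that
        by (simp add: A_def)
    next
      case False
      then show ?thesis using pim_pair[OF P _ _ _ False h h, of "{..<d}"] that
        by (simp add: B_def power2_eq_square)
    qed
    then show "integrable ?M (\<lambda>\<xi>. h (\<xi> i) * h (\<xi> j))"
      "(\<integral>\<xi>. h (\<xi> i) * h (\<xi> j) \<partial>?M) = (if i = j then A else B)" by auto
  qed
  show "integrable ?M (\<lambda>\<xi>. \<Sum>i<d. \<Sum>j<d. h (\<xi> i) * h (\<xi> j))"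
    by (rule Bochner_Integration.integrable_sum, rule Bochner_Integration.integrable_sum, rule ti) auto
  have "(\<integral>\<xi>. (\<Sum>i<d. \<Sum>j<d. h (\<xi> i) * h (\<xi> j)) \<partial>?M) = (\<Sum>i<d. \<Sum>j<d. (\<integral>\<xi>. h (\<xi> i) * h (\<xi> j) \<partial>?M))"
  proof -
    have "(\<integral>\<xi>. (\<Sum>i<d. \<Sum>j<d. h (\<xi> i) * h (\<xi> j)) \<partial>?M) = (\<Sum>i<d. (\<integral>\<xi>. (\<Sum>j<d. h (\<xi> i) * h (\<xi> j)) \<partial>?M))"
      by (rule Bochner_Integration.integral_sum, rule Bochner_Integration.integrable_sum, rule ti) auto
    also have "\<dots> = (\<Sum>i<d. \<Sum>j<d. (\<integral>\<xi>. h (\<xi> i) * h (\<xi> j) \<partial>?M))"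
      by (intro sum.cong refl Bochner_Integration.integral_sum ti) auto
    finally show ?thesis .
  qed
  also have "\<dots> = (\<Sum>i<d. (A - B) + real d * B)"
    using te dsum_if by (intro sum.cong) auto
  also have "\<dots> = real d * (A - B) + (real d)\<^sup>2 * B" by (simp add: power2_eq_square algebra_simps)
  also have "\<dots> \<le> real d * A + (real d)\<^sup>2 * B" by (simp add: B_def algebra_simps)
  finally show "(\<integral>\<xi>. (\<Sum>i<d. \<Sum>j<d. h (\<xi> i) * h (\<xi> j)) \<partial>?M)
       \<le> real d * (\<integral>x. h x * h x \<partial>P) + (real d)\<^sup>2 * (\<integral>x. h x \<partial>P)\<^sup>2"
    by (simp add: A_def B_def)
qed

lemma final_arith:
  fixes d q mx LL u c1 K4 K8 :: real
  assumes d: "d > 0" and q: "0 < q" "q \<le> 1" and m1: "1 / d \<le> mx\<^sup>2" and m2: "(q * LL)\<^sup>2 \<le> mx\<^sup>2"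
    and LL: "LL \<ge> 1" and u: "0 \<le> u" "u \<le> c1 * LL" and K: "K4 \<ge> 0" "K8 \<ge> 0"
  shows "2 * (K4 + 1) / d + 16 * q\<^sup>2 * u\<^sup>2 + 16 * (K8 + 2) * q / d + 16 * (K4 + 2)\<^sup>2 * q\<^sup>2
     \<le> (2 * (K4 + 1) + 16 * c1\<^sup>2 + 16 * (K8 + 2) + 16 * (K4 + 2)\<^sup>2) * mx\<^sup>2"
proof -
  have t1: "2 * (K4 + 1) / d \<le> 2 * (K4 + 1) * mx\<^sup>2"
    using mult_left_mono[OF m1, of "2 * (K4 + 1)"] K by simp
  have u2: "u\<^sup>2 \<le> (c1 * LL)\<^sup>2" using u by (intro power_mono) auto
  have "q\<^sup>2 * u\<^sup>2 \<le> q\<^sup>2 * (c1 * LL)\<^sup>2" using u2 by (intro mult_left_mono) auto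
  also have "\<dots> = c1\<^sup>2 * (q * LL)\<^sup>2" by (simp add: power_mult_distrib)
  also have "\<dots> \<le> c1\<^sup>2 * mx\<^sup>2" using m2 by (intro mult_left_mono) auto
  finally have t2: "16 * q\<^sup>2 * u\<^sup>2 \<le> 16 * c1\<^sup>2 * mx\<^sup>2" by simp
  have "q / d \<le> 1 / d" using q d by (intro divide_right_mono) auto
  then have "(K8 + 2) * q / d \<le> (K8 + 2) * mx\<^sup>2"
    using m1 K mult_left_mono[of "q/d" "mx\<^sup>2" "K8 + 2"] by simp
  then have t3: "16 * ((K8 + 2) * q / d) \<le> 16 * ((K8 + 2) * mx\<^sup>2)" by simp
  have "q\<^sup>2 \<le> (q * LL)\<^sup>2"
  proof -
    have "q \<le> q * LL" using q LL by simp
    then show ?thesis using q by (intro power_mono) auto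
  qed
  then have "q\<^sup>2 \<le> mx\<^sup>2" using m2 by simp
  then have t4: "16 * (K4 + 2)\<^sup>2 * q\<^sup>2 \<le> 16 * (K4 + 2)\<^sup>2 * mx\<^sup>2"
    by (intro mult_left_mono) auto
  have e: "16 * (K8 + 2) * q / d = 16 * ((K8 + 2) * q / d)" by simp
  have e2: "(2 * (K4 + 1) + 16 * c1\<^sup>2 + 16 * (K8 + 2) + 16 * (K4 + 2)\<^sup>2) * mx\<^sup>2 =
     2 * (K4 + 1) * mx\<^sup>2 + 16 * c1\<^sup>2 * mx\<^sup>2 + 16 * ((K8 + 2) * mx\<^sup>2) + 16 * (K4 + 2)\<^sup>2 * mx\<^sup>2"
    by (simp add: algebra_simps)
  show ?thesis unfolding e e2 using t1 t2 t3 t4 by linarith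
qed

lemma scalars:
  fixes a \<tau> :: real and d s :: nat
  assumes a: "a > 0" and t: "\<tau> > 0" and s: "1 \<le> s" and ds: "2 * s < d"
  defines "L0 \<equiv> ln (exp 1 * real d / real s)"
  defines "r \<equiv> max 2 (\<tau> * (2 * L0) powr (1 / a))"
  shows "L0 \<ge> 1" "L0 powr (2 / a) \<ge> 1" "r \<ge> 2"
    "exp (- ((r / \<tau>) powr a)) \<le> (real s / real d)\<^sup>2"
    "r\<^sup>2 \<le> (4 + \<tau>\<^sup>2 * 2 powr (2 / a)) * L0 powr (2 / a)"
proof -
  have sd: "real s > 0" "real d > real s" using s ds by auto
  have "exp 1 \<le> exp 1 * real d / real s" using sd by (simp add: field_simps)
  then have "ln (exp 1) \<le> L0" unfolding L0_def by (intro ln_mono) auto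
  then show L1: "L0 \<ge> 1" by simp
  show LL: "L0 powr (2 / a) \<ge> 1" using L1 a by (intro ge_one_powr_ge_zero) auto
  show "r \<ge> 2" by (simp add: r_def)
  have "(2 * L0) powr (1 / a) \<le> r / \<tau>" using t by (simp add: r_def field_simps)
  then have "((2 * L0) powr (1 / a)) powr a \<le> (r / \<tau>) powr a"
    using a by (intro powr_mono2) auto
  also have "((2 * L0) powr (1 / a)) powr a = 2 * L0" using a L1 by (simp add: powr_powr)
  finally have "- ((r / \<tau>) powr a) \<le> - (2 * L0)" by simp
  then have "exp (- ((r / \<tau>) powr a)) \<le> exp (- (2 * L0))" by simp
  also have "exp (- (2 * L0)) = (1 / exp L0)\<^sup>2"
  proof -
    have "exp (2 * L0) = exp L0 * exp L0" by (simp only: mult_2 exp_add)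
    then show ?thesis by (simp add: exp_minus power2_eq_square divide_inverse)
  qed
  also have "exp L0 = exp 1 * real d / real s" unfolding L0_def using sd by simp
  also have "(1 / (exp 1 * real d / real s))\<^sup>2 \<le> (real s / real d)\<^sup>2"
  proof (intro power_mono)
    have e1: "1 / exp 1 \<le> (1::real)" by simp
    have "real s / (exp 1 * real d) = (real s / real d) * (1 / exp 1)" by simp
    also have "\<dots> \<le> real s / real d" using e1 sd by (intro mult_left_le) auto
    finally have "real s / (exp 1 * real d) \<le> real s / real d" .
    then show "1 / (exp 1 * real d / real s) \<le> real s / real d" by simp
  qed (use sd in auto)
  finally show "exp (- ((r / \<tau>) powr a)) \<le> (real s / real d)\<^sup>2" .
  have "r\<^sup>2 \<le> 4 + (\<tau> * (2 * L0) powr (1 / a))\<^sup>2"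
  proof (cases "2 \<le> \<tau> * (2 * L0) powr (1 / a)")
    case True then show ?thesis by (simp add: r_def max_def)
  next
    case False then show ?thesis by (simp add: r_def max_def)
  qed
  also have "(\<tau> * (2 * L0) powr (1 / a))\<^sup>2 = \<tau>\<^sup>2 * (2 powr (2 / a) * L0 powr (2 / a))"
  proof -
    have "((2 * L0) powr (1 / a))\<^sup>2 = (2 * L0) powr (2 / a)"
      using L1 by (simp add: powr_realpow[symmetric] powr_powr)
    then show ?thesis by (simp add: power_mult_distrib powr_mult)
  qed
  also have "4 + \<tau>\<^sup>2 * (2 powr (2 / a) * L0 powr (2 / a)) \<le> (4 + \<tau>\<^sup>2 * 2 powr (2 / a)) * L0 powr (2 / a)"
    using LL by (simp add: algebra_simps)
  finally show "r\<^sup>2 \<le> (4 + \<tau>\<^sup>2 * 2 powr (2 / a)) * L0 powr (2 / a)" by simp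
qed

theorem theorem3:
  fixes a \<tau> :: real
  assumes "a > 0" and "\<tau> > 0"
  shows "\<exists>C>0. \<forall>(d::nat) (s::nat) P (\<sigma>::real) \<theta>.
           1 \<le> s \<longrightarrow> 2 * s < d \<longrightarrow> noise_class a \<tau> P \<longrightarrow> \<sigma> > 0 \<longrightarrow>
           \<theta> \<in> sparse_vecs d s \<longrightarrow>
           (\<integral>\<^sup>+ \<xi>. ennreal ((sigma_hat_sq d s (obs \<theta> \<sigma> \<xi>) - \<sigma>\<^sup>2)\<^sup>2) \<partial>(PiM {..<d} (\<lambda>_. P)))
             \<le> ennreal (C * \<sigma> ^ 4 *
                 (max (1 / sqrt (real d))
                      (real s / real d * (ln (exp 1 * real d / real s)) powr (2 / a)))\<^sup>2)"
proof -
  obtain K8 where K8: "K8 \<ge> 0" "\<And>P. noise_class a \<tau> P \<Longrightarrow> integrable P (\<lambda>x. x^8) \<and> (\<integral>x. x^8 \<partial>P) \<le> K8"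
    using moment8[OF assms] by blast
  define K4 where "K4 = 1 + K8"
  have K4: "K4 \<ge> 0" using K8 by (simp add: K4_def)
  define c1 where "c1 = 4 + \<tau>\<^sup>2 * 2 powr (2 / a)"
  define C where "C = 2 * (K4 + 1) + 16 * c1\<^sup>2 + 16 * (K8 + 2) + 16 * (K4 + 2)\<^sup>2"
  have C0: "C > 0"
  proof -
    have "0 < 2 * (K4 + 1)" using K4 by simp
    moreover have "0 \<le> 16 * c1\<^sup>2" "0 \<le> 16 * (K8 + 2)" "0 \<le> 16 * (K4 + 2)\<^sup>2" using K8 by auto
    ultimately show ?thesis unfolding C_def by linarith
  qed
  show ?thesis
  proof (intro exI[of _ C] conjI C0 allI impI)
    fix d s :: nat and P :: "real measure" and \<sigma> :: real and \<theta> :: "nat \<Rightarrow> real"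
    assume s1: "1 \<le> s" and ds: "2 * s < d" and nc: "noise_class a \<tau> P" and sg: "\<sigma> > 0"
      and th: "\<theta> \<in> sparse_vecs d s"
    have ps: "prob_space P" and sP: "sets P = sets borel" and i2: "integrable P (\<lambda>x. x\<^sup>2)"
      and e2: "(\<integral>x. x\<^sup>2 \<partial>P) = 1"
      and tail: "\<And>t. t \<ge> 2 \<Longrightarrow> measure P {x. \<bar>x\<bar> > t} \<le> 2 * exp (- ((t / \<tau>) powr a))"
      using nc by (auto simp: noise_class_def)
    interpret P: prob_space P by fact
    have meas: "f \<in> borel_measurable P" if "f \<in> borel_measurable borel" for f :: "real \<Rightarrow> real"
      by (subst measurable_cong_sets[OF sP refl]) (rule that)
    have i8: "integrable P (\<lambda>x. x^8)" and e8: "(\<integral>x. x^8 \<partial>P) \<le> K8" using K8(2)[OF nc] by auto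
    have x48: "x^4 \<le> 1 + x^8" for x :: real
    proof -
      have "0 \<le> (x^4 - 1/2)\<^sup>2" by simp
      then have "0 \<le> x^8 - x^4 + 1/4" by (simp add: power2_eq_square algebra_simps flip: power_add)
      then show ?thesis by linarith
    qed
    have i18: "integrable P (\<lambda>x. 1 + x^8)" using i8 by simp
    have i4: "integrable P (\<lambda>x. x^4)"
    proof (rule Bochner_Integration.integrable_bound[OF i18], rule meas, simp, rule AE_I2)
      fix x :: real
      have "0 \<le> x^4" by (simp add: zero_le_even_power')
      moreover have "0 \<le> 1 + x^8" by (simp add: zero_le_even_power' add_nonneg_nonneg)
      ultimately show "norm (x^4) \<le> norm (1 + x^8)" using x48[of x] by simp
    qed
    have e4: "(\<integral>x. x^4 \<partial>P) \<le> K4"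
    proof -
      have "(\<integral>x. x^4 \<partial>P) \<le> (\<integral>x. 1 + x^8 \<partial>P)" using i4 i18 x48 by (intro integral_mono) auto
      also have "\<dots> = 1 + (\<integral>x. x^8 \<partial>P)" using i8 by (simp add: P.prob_space)
      finally show ?thesis using e8 by (simp add: K4_def)
    qed
    define L0 where "L0 = ln (exp 1 * real d / real s)"
    define r where "r = max 2 (\<tau> * (2 * L0) powr (1 / a))"
    define LL where "LL = L0 powr (2 / a)"
    note sc = scalars[OF assms s1 ds, folded L0_def, folded r_def]
    have LL1: "LL \<ge> 1" using sc by (simp add: LL_def)
    have r2: "r \<ge> 2" using sc by simp
    have ru: "r\<^sup>2 \<le> c1 * LL" using sc by (simp add: c1_def LL_def)
    have tailr: "measure P {x. \<bar>x\<bar> > r} \<le> 2 * (real s / real d)\<^sup>2"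
      using tail[OF r2] sc(4) by linarith
    define t where "t = real s / real d"
    have tpos: "t > 0" and t1: "t \<le> 1" using s1 ds by (auto simp: t_def)
    have pt: "2 * (real s / real d)\<^sup>2 / t = 2 * t" using tpos by (simp add: t_def power2_eq_square)
    note WB = W_bounds[OF ps sP i4 i8 e4 e8 _ tpos tailr, unfolded pt]
    have iW: "integrable P (\<lambda>x. max 0 (x\<^sup>2 - r\<^sup>2))"
      and iWW: "integrable P (\<lambda>x. max 0 (x\<^sup>2 - r\<^sup>2) * max 0 (x\<^sup>2 - r\<^sup>2))"
      using WB r2 by auto
    have eW: "(\<integral>x. max 0 (x\<^sup>2 - r\<^sup>2) \<partial>P) \<le> (K4 + 2) * t"
    proof -
      have "(\<integral>x. max 0 (x\<^sup>2 - r\<^sup>2) \<partial>P) \<le> (t * K4 + 2 * t) / 2" using WB(2) r2 by simp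
      moreover have "(t * K4 + 2 * t) / 2 \<le> (K4 + 2) * t"
      proof -
        have "0 \<le> t * K4" using tpos K4 by simp
        then show ?thesis using tpos by (simp add: algebra_simps)
      qed
      ultimately show ?thesis by (rule order_trans)
    qed
    have eWW: "(\<integral>x. max 0 (x\<^sup>2 - r\<^sup>2) * max 0 (x\<^sup>2 - r\<^sup>2) \<partial>P) \<le> (K8 + 2) * t"
    proof -
      have "(\<integral>x. max 0 (x\<^sup>2 - r\<^sup>2) * max 0 (x\<^sup>2 - r\<^sup>2) \<partial>P) \<le> (t * K8 + 2 * t) / 2" using WB(4) r2 by simp
      moreover have "(t * K8 + 2 * t) / 2 \<le> (K8 + 2) * t"
      proof -
        have "0 \<le> t * K8" using tpos K8 by simp
        then show ?thesis using tpos by (simp add: algebra_simps)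
      qed
      ultimately show ?thesis by (rule order_trans)
    qed
    have eW0: "0 \<le> (\<integral>x. max 0 (x\<^sup>2 - r\<^sup>2) \<partial>P)" by (rule Bochner_Integration.integral_nonneg) auto
    have ih1: "integrable P (\<lambda>x. x\<^sup>2 - 1)" using i2 by simp
    have hh: "(x\<^sup>2 - 1) * (x\<^sup>2 - 1) = x^4 - 2 * x\<^sup>2 + 1" for x :: real
      by (simp add: power2_eq_square power4_eq_xxxx algebra_simps)
    have ih1h1: "integrable P (\<lambda>x. (x\<^sup>2 - 1) * (x\<^sup>2 - 1))"
      unfolding hh using i4 i2 by simp
    have eh1: "(\<integral>x. x\<^sup>2 - 1 \<partial>P) = 0" using i2 e2 by (simp add: P.prob_space)
    have eh1h1: "(\<integral>x. (x\<^sup>2 - 1) * (x\<^sup>2 - 1) \<partial>P) \<le> K4 + 1"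
    proof -
      have "(\<integral>x. (x\<^sup>2 - 1) * (x\<^sup>2 - 1) \<partial>P) \<le> (\<integral>x. x^4 + 1 \<partial>P)"
        using ih1h1 i4 by (intro integral_mono) (auto simp: hh)
      also have "\<dots> = (\<integral>x. x^4 \<partial>P) + 1" using i4 by (simp add: P.prob_space)
      finally show ?thesis using e4 by simp
    qed
    let ?M = "PiM {..<d} (\<lambda>_. P)"
    have pM: "prob_space ?M" using ps by (intro prob_space_PiM) auto
    interpret M: prob_space ?M by fact
    define D1 where "D1 \<xi> = (\<Sum>i<d. \<Sum>j<d. ((\<xi> i)\<^sup>2 - 1) * ((\<xi> j)\<^sup>2 - 1))" for \<xi> :: "nat \<Rightarrow> real"
    define D2 where "D2 \<xi> = (\<Sum>i<d. \<Sum>j<d. max 0 ((\<xi> i)\<^sup>2 - r\<^sup>2) * max 0 ((\<xi> j)\<^sup>2 - r\<^sup>2))" for \<xi> :: "nat \<Rightarrow> real"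
    note DS1 = dsum_pim[OF ps ih1 ih1h1, of d, folded D1_def]
    note DS2 = dsum_pim[OF ps iW iWW, of d, folded D2_def]
    have ED1: "(\<integral>\<xi>. D1 \<xi> \<partial>?M) \<le> real d * (K4 + 1)"
    proof -
      have "real d * (\<integral>x. (x\<^sup>2 - 1) * (x\<^sup>2 - 1) \<partial>P) \<le> real d * (K4 + 1)"
        using eh1h1 by (intro mult_left_mono) auto
      then show ?thesis using DS1(2) eh1 by simp
    qed
    have ED2: "(\<integral>\<xi>. D2 \<xi> \<partial>?M) \<le> real d * ((K8 + 2) * t) + (real d)\<^sup>2 * ((K4 + 2) * t)\<^sup>2"
    proof -
      have "(\<integral>x. max 0 (x\<^sup>2 - r\<^sup>2) \<partial>P)\<^sup>2 \<le> ((K4 + 2) * t)\<^sup>2"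
        using eW eW0 by (intro power_mono) auto
      then show ?thesis using DS2(2) eWW
        by (smt (verit, best) mult_left_mono of_nat_0_le_iff zero_le_power2)
    qed
    define G where "G \<xi> = 2 * D1 \<xi> + 16 * (real s * r\<^sup>2)\<^sup>2 + 16 * D2 \<xi>" for \<xi>
    have iG: "integrable ?M G" unfolding G_def using DS1(1) DS2(1) by simp
    have EG: "(\<integral>\<xi>. G \<xi> \<partial>?M) = 2 * (\<integral>\<xi>. D1 \<xi> \<partial>?M) + 16 * (real s * r\<^sup>2)\<^sup>2 + 16 * (\<integral>\<xi>. D2 \<xi> \<partial>?M)"
      unfolding G_def using DS1(1) DS2(1) by (simp add: M.prob_space)
    have G0: "G \<xi> \<ge> 0" for \<xi>
    proof -
      have "D1 \<xi> \<ge> 0" unfolding D1_def using sq_sum_double[of "\<lambda>i. (\<xi> i)\<^sup>2 - 1" d] by (metis zero_le_power2)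
      moreover have "D2 \<xi> \<ge> 0" unfolding D2_def using sq_sum_double[of "\<lambda>i. max 0 ((\<xi> i)\<^sup>2 - r\<^sup>2)" d] by (metis zero_le_power2)
      ultimately show ?thesis unfolding G_def by simp
    qed
    have cardJ: "card {i\<in>{..<d}. \<theta> i \<noteq> 0} \<le> s" using th by (simp add: sparse_vecs_def)
    have pw: "(sigma_hat_sq d s (obs \<theta> \<sigma> \<xi>) - \<sigma>\<^sup>2)\<^sup>2 \<le> \<sigma>^4 / (real d)\<^sup>2 * G \<xi>" for \<xi>
      using pointwise_bound[OF cardJ ds sg, of "r\<^sup>2" \<xi>] unfolding G_def D1_def D2_def by simp
    define mx where "mx = max (1 / sqrt (real d)) (real s / real d * (ln (exp 1 * real d / real s)) powr (2 / a))"
    have dpos: "real d > 0" using ds by simp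
    have m1: "1 / real d \<le> mx\<^sup>2"
    proof -
      have "(1 / sqrt (real d))\<^sup>2 \<le> mx\<^sup>2" unfolding mx_def by (intro power_mono) auto
      then show ?thesis using dpos by (simp add: power_divide)
    qed
    have m2: "(t * LL)\<^sup>2 \<le> mx\<^sup>2"
    proof -
      have "0 \<le> t * LL" using tpos LL1 by simp
      moreover have "t * LL \<le> mx" unfolding mx_def t_def LL_def L0_def by simp
      ultimately show ?thesis by (intro power_mono) auto
    qed
    have fa: "2 * (K4 + 1) / real d + 16 * t\<^sup>2 * (r\<^sup>2)\<^sup>2 + 16 * (K8 + 2) * t / real d + 16 * (K4 + 2)\<^sup>2 * t\<^sup>2 \<le> C * mx\<^sup>2"
      unfolding C_def using final_arith[OF dpos tpos t1 m1 m2 LL1 _ ru K4 K8(1)] by simp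
    have Ebound: "(\<integral>\<xi>. G \<xi> \<partial>?M) / (real d)\<^sup>2 \<le> C * mx\<^sup>2"
    proof -
      have "(\<integral>\<xi>. G \<xi> \<partial>?M) \<le> 2 * (real d * (K4 + 1)) + 16 * (real s * r\<^sup>2)\<^sup>2 + 16 * (real d * ((K8 + 2) * t) + (real d)\<^sup>2 * ((K4 + 2) * t)\<^sup>2)"
        unfolding EG using ED1 ED2 by (intro add_mono mult_left_mono order_refl) auto
      then have "(\<integral>\<xi>. G \<xi> \<partial>?M) / (real d)\<^sup>2 \<le> (2 * (real d * (K4 + 1)) + 16 * (real s * r\<^sup>2)\<^sup>2 + 16 * (real d * ((K8 + 2) * t) + (real d)\<^sup>2 * ((K4 + 2) * t)\<^sup>2)) / (real d)\<^sup>2"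
        by (intro divide_right_mono) auto
      also have "\<dots> = 2 * (K4 + 1) / real d + 16 * t\<^sup>2 * (r\<^sup>2)\<^sup>2 + 16 * (K8 + 2) * t / real d + 16 * (K4 + 2)\<^sup>2 * t\<^sup>2"
        using dpos by (simp add: t_def field_simps power2_eq_square)
      finally show ?thesis using fa by linarith
    qed
    have "(\<integral>\<^sup>+ \<xi>. ennreal ((sigma_hat_sq d s (obs \<theta> \<sigma> \<xi>) - \<sigma>\<^sup>2)\<^sup>2) \<partial>?M)
        \<le> (\<integral>\<^sup>+ \<xi>. ennreal (\<sigma>^4 / (real d)\<^sup>2 * G \<xi>) \<partial>?M)"
      by (intro nn_integral_mono ennreal_leI pw)
    also have "\<dots> = ennreal (\<integral>\<xi>. \<sigma>^4 / (real d)\<^sup>2 * G \<xi> \<partial>?M)"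
      using iG G0 by (intro nn_integral_eq_integral) auto
    also have "(\<integral>\<xi>. \<sigma>^4 / (real d)\<^sup>2 * G \<xi> \<partial>?M) = \<sigma>^4 * ((\<integral>\<xi>. G \<xi> \<partial>?M) / (real d)\<^sup>2)"
      by simp
    also have "\<dots> \<le> \<sigma>^4 * (C * mx\<^sup>2)" using Ebound sg by (intro mult_left_mono) auto
    finally show "(\<integral>\<^sup>+ \<xi>. ennreal ((sigma_hat_sq d s (obs \<theta> \<sigma> \<xi>) - \<sigma>\<^sup>2)\<^sup>2) \<partial>?M)
             \<le> ennreal (C * \<sigma> ^ 4 *
                 (max (1 / sqrt (real d))
                      (real s / real d * (ln (exp 1 * real d / real s)) powr (2 / a)))\<^sup>2)"
      unfolding mx_def[symmetric] by (simp add: ennreal_leI mult_ac)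
  qed
qed

end
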